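(* Let $q\ge 1$ be an integer and let $X$ be a random variable such that $qX$ is integer-valued almost surely. Then for all real $t$, \[ \varphi_{\lfloor X\rfloor}(t)=\sum_{j=0}^{q-1} h_q(t+2\pi j)\,\varphi_X(t+2\pi j) \qquad\text{and}\qquad \varphi_{\langle X\rangle}(t)=\sum_{j=0}^{q-1} \tilde h_q(t+2\pi j)\,\varphi_X(t+2\pi j). \]
   Context: For a random variable $Y$, $\varphi_Y(t):=\mathbb E\, e^{\mathrm i tY}$ is its characteristic function. $\lfloor x\rfloor$ is $x$ rounded down to an integer, and $\langle x\rangle:=\lfloor x+\tfrac12\rfloor$ is $x$ rounded to the nearest integer, with ties broken upward. Define \[ h_q(t):=\frac1q\sum_{k=0}^{q-1}e^{-\mathrm i tk/q}=\frac{1-e^{-\mathrm i t}}{q(1-e^{-\mathrm i t/q})}, \] where the fraction is interpreted as $1$ when $t\in 2\pi q\mathbb Z$. If $q$ is even, define $\tilde h_q(t):=\frac1q\sum_{k=-q/2}^{q/2-1}e^{-\mathrm i tk/q}=e^{\mathrm i t/2}h_q(t)$. If $q$ is odd, define $\tilde h_q(t):=\frac1q\sum_{k=-(q-1)/2}^{(q-1)/2}e^{-\mathrm i tk/q}=\frac{\sin(t/2)}{q\sin(t/(2q))}$, again interpreted as $1$ when $t\in 2\pi q\mathbb Z$. *)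

theory Defs
  imports "HOL-Probability.Probability"
begin

definition charfun :: "'a measure \<Rightarrow> ('a \<Rightarrow> real) \<Rightarrow> real \<Rightarrow> complex" where
  "charfun M Y t = char (distr M borel Y) t"

definition round_near :: "real \<Rightarrow> int" where
  "round_near x = \<lfloor>x + 1/2\<rfloor>"

definition h :: "nat \<Rightarrow> real \<Rightarrow> complex" where
  "h q t = (1 / of_nat q) * (\<Sum>k<q. exp (- \<i> * complex_of_real (t * real k / real q)))"

definition h_tilde :: "nat \<Rightarrow> real \<Rightarrow> complex" where
  "h_tilde q t =
     (if even q then (1 / of_nat q) *
        (\<Sum>k\<in>{- int (q div 2) ..< int (q div 2)}. exp (- \<i> * complex_of_real (t * real_of_int k / real q)))
      else (1 / of_nat q) *
        (\<Sum>k\<in>{- int ((q - 1) div 2) .. int ((q - 1) div 2)}. exp (- \<i> * complex_of_real (t * real_of_int k / real q))))"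

end

theory Submission
  imports Defs
begin

lemma root_sum:
  fixes q :: nat and d :: int
  assumes q: "q \<ge> 1"
  shows "(\<Sum>j<q. exp (\<i> * complex_of_real (2 * pi * real j * real_of_int d / real q)))
         = (if (int q) dvd d then of_nat q else 0)"
proof -
  define z where "z = exp (\<i> * complex_of_real (2 * pi * real_of_int d / real q))"
  have tm: "exp (\<i> * complex_of_real (2 * pi * real j * real_of_int d / real q)) = z ^ j" for j
    unfolding z_def by (simp add: exp_of_nat_mult[symmetric] algebra_simps)
  have zq: "z ^ q = 1"
  proof -
    have "z ^ q = exp (of_nat q * (\<i> * complex_of_real (2 * pi * real_of_int d / real q)))"
      unfolding z_def by (rule exp_of_nat_mult[symmetric])
    also have "of_nat q * (\<i> * complex_of_real (2 * pi * real_of_int d / real q)) = \<i> * complex_of_real (2 * pi * real_of_int d)"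
      using q by (simp add: field_simps)
    also have "exp \<dots> = 1" by (subst exp_eq_1) (auto intro!: exI[of _ d])
    finally show ?thesis .
  qed
  have z1: "z = 1 \<longleftrightarrow> int q dvd d"
  proof
    assume "z = 1"
    then obtain n :: int where n: "2 * pi * real_of_int d / real q = of_int (2 * n) * pi"
      unfolding z_def exp_eq_1 by auto
    hence "real_of_int d = real q * of_int n" using q by (simp add: field_simps)
    hence "d = int q * n" by (metis of_int_eq_iff of_int_mult of_int_of_nat_eq)
    thus "int q dvd d" by simp
  next
    assume "int q dvd d"
    then obtain n where "d = int q * n" by auto
    hence "2 * pi * real_of_int d / real q = of_int (2 * n) * pi" using q by simp
    thus "z = 1" unfolding z_def by (subst exp_eq_1) auto
  qed
  have "(\<Sum>j<q. exp (\<i> * complex_of_real (2 * pi * real j * real_of_int d / real q))) = (\<Sum>j<q. z ^ j)"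
    by (rule sum.cong, rule refl, rule tm)
  also have "\<dots> = (if int q dvd d then of_nat q else 0)"
    using zq z1 by (simp add: sum_gp_strict)
  finally show ?thesis .
qed

lemma dvd_iff_k0:
  fixes q :: nat and a m k :: int
  assumes q: "q \<ge> 1" and k: "k \<in> {a..<a + int q}"
  shows "int q dvd (m - k) \<longleftrightarrow> k = a + (m - a) mod int q"
proof
  assume "int q dvd (m - k)"
  hence "(m - a) mod int q = (k - a) mod int q"
    by (simp add: mod_eq_dvd_iff)
  also have "(k - a) mod int q = k - a" using k by (intro mod_pos_pos_trivial) auto
  finally show "k = a + (m - a) mod int q" by simp
next
  assume "k = a + (m - a) mod int q"
  hence "m - k = int q * ((m - a) div int q)" using div_mult_mod_eq[of "m - a" "int q"] by (simp add: algebra_simps)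
  thus "int q dvd (m - k)" by simp
qed

lemma key:
  fixes q :: nat and a m :: int and t :: real
  assumes q: "q \<ge> 1"
  shows "(\<Sum>j<q. ((1 / of_nat q) * (\<Sum>k\<in>{a..<a + int q}. exp (- \<i> * complex_of_real ((t + 2 * pi * real j) * real_of_int k / real q))))
              * exp (\<i> * complex_of_real ((t + 2 * pi * real j) * (real_of_int m / real q))))
       = exp (\<i> * complex_of_real (t * real_of_int ((m - a) div int q)))"
proof -
  define K where "K = {a..<a + int q}"
  define k0 where "k0 = a + (m - a) mod int q"
  have k0K: "k0 \<in> K" unfolding K_def k0_def using q by auto
  have E: "exp (- \<i> * complex_of_real ((t + 2 * pi * real j) * real_of_int k / real q))
              * exp (\<i> * complex_of_real ((t + 2 * pi * real j) * (real_of_int m / real q)))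
         = exp (\<i> * complex_of_real (t * real_of_int (m - k) / real q))
           * exp (\<i> * complex_of_real (2 * pi * real j * real_of_int (m - k) / real q))" for j k
  proof -
    have "exp (- \<i> * complex_of_real ((t + 2 * pi * real j) * real_of_int k / real q))
              * exp (\<i> * complex_of_real ((t + 2 * pi * real j) * (real_of_int m / real q)))
        = exp (- \<i> * complex_of_real ((t + 2 * pi * real j) * real_of_int k / real q)
               + \<i> * complex_of_real ((t + 2 * pi * real j) * (real_of_int m / real q)))"
      by (rule exp_add[symmetric])
    also have "- \<i> * complex_of_real ((t + 2 * pi * real j) * real_of_int k / real q)
               + \<i> * complex_of_real ((t + 2 * pi * real j) * (real_of_int m / real q))
             = \<i> * complex_of_real (t * real_of_int (m - k) / real q)
               + \<i> * complex_of_real (2 * pi * real j * real_of_int (m - k) / real q)"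
      using q by (simp add: field_simps)
    also have "exp \<dots> = exp (\<i> * complex_of_real (t * real_of_int (m - k) / real q))
           * exp (\<i> * complex_of_real (2 * pi * real j * real_of_int (m - k) / real q))"
      by (rule exp_add)
    finally show ?thesis .
  qed
  have "(\<Sum>j<q. ((1 / of_nat q) * (\<Sum>k\<in>{a..<a + int q}. exp (- \<i> * complex_of_real ((t + 2 * pi * real j) * real_of_int k / real q))))
              * exp (\<i> * complex_of_real ((t + 2 * pi * real j) * (real_of_int m / real q))))
     = (\<Sum>k\<in>K. (1 / of_nat q) * (\<Sum>j<q. exp (- \<i> * complex_of_real ((t + 2 * pi * real j) * real_of_int k / real q))
              * exp (\<i> * complex_of_real ((t + 2 * pi * real j) * (real_of_int m / real q)))))"
    unfolding K_def sum_distrib_left sum_distrib_right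
    by (subst sum.swap) (simp add: mult.assoc)
  also have "(\<Sum>k\<in>K. (1 / of_nat q) * (\<Sum>j<q. exp (- \<i> * complex_of_real ((t + 2 * pi * real j) * real_of_int k / real q))
              * exp (\<i> * complex_of_real ((t + 2 * pi * real j) * (real_of_int m / real q)))))
      = (\<Sum>k\<in>K. (1 / of_nat q) * (exp (\<i> * complex_of_real (t * real_of_int (m - k) / real q))
             * (if k = k0 then of_nat q else 0)))"
  proof (rule sum.cong[OF refl])
    fix k assume kK: "k \<in> K"
    have "(\<Sum>j<q. exp (- \<i> * complex_of_real ((t + 2 * pi * real j) * real_of_int k / real q))
              * exp (\<i> * complex_of_real ((t + 2 * pi * real j) * (real_of_int m / real q))))
        = exp (\<i> * complex_of_real (t * real_of_int (m - k) / real q)) *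
           (\<Sum>j<q. exp (\<i> * complex_of_real (2 * pi * real j * real_of_int (m - k) / real q)))"
      unfolding E sum_distrib_left ..
    also have "\<dots> = exp (\<i> * complex_of_real (t * real_of_int (m - k) / real q))
             * (if k = k0 then of_nat q else 0)"
      using root_sum[OF q, of "m - k"] dvd_iff_k0[OF q, of k a m] kK unfolding K_def k0_def by simp
    finally show "(1 / of_nat q) * (\<Sum>j<q. exp (- \<i> * complex_of_real ((t + 2 * pi * real j) * real_of_int k / real q))
              * exp (\<i> * complex_of_real ((t + 2 * pi * real j) * (real_of_int m / real q))))
       = (1 / of_nat q) * (exp (\<i> * complex_of_real (t * real_of_int (m - k) / real q))
             * (if k = k0 then of_nat q else 0))" by simp
  qed
  also have "\<dots> = (1 / of_nat q) * (exp (\<i> * complex_of_real (t * real_of_int (m - k0) / real q)) * of_nat q)"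
    using k0K by (simp add: if_distrib[of "\<lambda>x. _ * x"] if_distrib[of "\<lambda>x. _ * (_ * x)"] K_def cong: if_cong)
  also have "\<dots> = exp (\<i> * complex_of_real (t * real_of_int (m - k0) / real q))"
    using q by simp
  also have "t * real_of_int (m - k0) / real q = t * real_of_int ((m - a) div int q)"
  proof -
    have "m - k0 = int q * ((m - a) div int q)" unfolding k0_def using div_mult_mod_eq[of "m - a" "int q"] by (simp add: algebra_simps)
    hence "real_of_int (m - k0) = real q * real_of_int ((m - a) div int q)"
      by (metis of_int_mult of_int_of_nat_eq)
    thus ?thesis using q by (simp add: field_simps)
  qed
  finally show ?thesis .
qed

lemma h_alt:
  fixes q :: nat and s :: real
  shows "h q s = (1 / of_nat q) * (\<Sum>k\<in>{0..<0 + int q}. exp (- \<i> * complex_of_real (s * real_of_int k / real q)))"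
proof -
  have "(\<Sum>k\<in>{0..<0 + int q}. exp (- \<i> * complex_of_real (s * real_of_int k / real q)))
      = (\<Sum>k\<in>int ` {..<q}. exp (- \<i> * complex_of_real (s * real_of_int k / real q)))"
    by (simp add: image_atLeastZeroLessThan_int)
  also have "\<dots> = (\<Sum>k<q. exp (- \<i> * complex_of_real (s * real k / real q)))"
    by (subst sum.reindex) auto
  finally show ?thesis unfolding h_def by simp
qed

lemma ht_alt:
  fixes q :: nat and s :: real
  shows "h_tilde q s = (1 / of_nat q) * (\<Sum>k\<in>{- int (q div 2)..<- int (q div 2) + int q}. exp (- \<i> * complex_of_real (s * real_of_int k / real q)))"
proof (cases "even q")
  case True
  hence "{- int (q div 2)..<- int (q div 2) + int q} = {- int (q div 2) ..< int (q div 2)}"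
    by auto
  thus ?thesis using True unfolding h_tilde_def by simp
next
  case False
  hence "{- int (q div 2)..<- int (q div 2) + int q} = {- int ((q - 1) div 2) .. int ((q - 1) div 2)}"
    by (auto elim!: oddE)
  thus ?thesis using False unfolding h_tilde_def by simp
qed

lemma round_lemma:
  fixes q :: nat and m :: int
  assumes q: "q \<ge> 1"
  shows "round_near (real_of_int m / real q) = (m + int (q div 2)) div int q"
proof -
  define Q where "Q = int q"
  define p where "p = int (q div 2)"
  define n where "n = (m + p) div Q"
  define r where "r = (m + p) mod Q"
  have Q0: "Q > 0" using q unfolding Q_def by simp
  have eq: "m + p = Q * n + r" unfolding n_def r_def by simp
  have r: "0 \<le> r" "r < Q" unfolding r_def using Q0 by auto
  have pQ: "2 * p \<le> Q" "Q \<le> 2 * p + 1" unfolding p_def Q_def by auto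
  have i1: "n * (2 * Q) \<le> 2 * m + Q" using eq r pQ by (simp add: algebra_simps)
  have i2: "2 * m + Q < (n + 1) * (2 * Q)" using eq r pQ by (simp add: algebra_simps)
  have x: "real_of_int m / real q + 1 / 2 = real_of_int (2 * m + Q) / real_of_int (2 * Q)"
    unfolding Q_def using q by (simp add: field_simps)
  have Q0': "real_of_int (2 * Q) > 0" using Q0 by simp
  have "of_int n \<le> real_of_int m / real q + 1 / 2"
    unfolding x using Q0' i1 by (simp add: le_divide_eq flip: of_int_mult of_int_le_iff)
  moreover have "real_of_int m / real q + 1 / 2 < of_int n + 1"
  proof -
    have "real_of_int (2 * m + Q) < real_of_int ((n + 1) * (2 * Q))" using i2 by (simp only: of_int_less_iff)
    thus ?thesis unfolding x using Q0' by (simp add: divide_less_eq)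
  qed
  ultimately have "\<lfloor>real_of_int m / real q + 1 / 2\<rfloor> = n" by (intro floor_unique)
  thus ?thesis unfolding round_near_def n_def p_def Q_def .
qed

lemma charfun_int:
  assumes "prob_space M" and [measurable]: "Y \<in> borel_measurable M"
  shows "charfun M Y t = (\<integral>\<omega>. exp (\<i> * complex_of_real (t * Y \<omega>)) \<partial>M)"
  unfolding charfun_def char_def by (subst integral_distr) auto

lemma charfun_combo:
  fixes c :: "nat \<Rightarrow> complex" and s :: "nat \<Rightarrow> real"
  assumes P: "prob_space M" and MY[measurable]: "Y \<in> borel_measurable M" and MX[measurable]: "X \<in> borel_measurable M"
    and AE: "AE \<omega> in M. exp (\<i> * complex_of_real (t * Y \<omega>))
               = (\<Sum>j<q. c j * exp (\<i> * complex_of_real (s j * X \<omega>)))"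
  shows "charfun M Y t = (\<Sum>j<q. c j * charfun M X (s j))"
proof -
  have int: "integrable M (\<lambda>\<omega>. exp (\<i> * complex_of_real (s j * X \<omega>)))" for j
    by (rule prob_space.integrable_iexp[OF P]) auto
  have "charfun M Y t = (\<integral>\<omega>. (\<Sum>j<q. c j * exp (\<i> * complex_of_real (s j * X \<omega>))) \<partial>M)"
    unfolding charfun_int[OF P MY] by (rule integral_cong_AE) (use AE in auto)
  also have "\<dots> = (\<Sum>j<q. (\<integral>\<omega>. c j * exp (\<i> * complex_of_real (s j * X \<omega>)) \<partial>M))"
    by (rule Bochner_Integration.integral_sum) (use int in auto)
  also have "\<dots> = (\<Sum>j<q. c j * charfun M X (s j))"
    unfolding charfun_int[OF P MX] by simp
  finally show ?thesis .
qed

theorem theorem1: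
  fixes M :: "'a measure" and X :: "'a \<Rightarrow> real" and q :: nat
  assumes "prob_space M"
    and "X \<in> borel_measurable M"
    and "q \<ge> 1"
    and "AE \<omega> in M. real q * X \<omega> \<in> \<int>"
  shows "\<forall>t::real.
      charfun M (\<lambda>\<omega>. real_of_int \<lfloor>X \<omega>\<rfloor>) t
        = (\<Sum>j<q. h q (t + 2 * pi * real j) * charfun M X (t + 2 * pi * real j))
    \<and> charfun M (\<lambda>\<omega>. real_of_int (round_near (X \<omega>))) t
        = (\<Sum>j<q. h_tilde q (t + 2 * pi * real j) * charfun M X (t + 2 * pi * real j))"
proof
  fix t :: real
  note P = assms(1) and q = assms(3)
  note [measurable] = assms(2)
  have AEm: "AE \<omega> in M. \<exists>m::int. X \<omega> = real_of_int m / real q"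
    using assms(4)
  proof (rule AE_mp, intro AE_I2 impI)
    fix \<omega> assume "real q * X \<omega> \<in> \<int>"
    then obtain m where "real q * X \<omega> = of_int m" by (auto elim: Ints_cases)
    hence "X \<omega> = real_of_int m / real q" using q by (simp add: field_simps)
    thus "\<exists>m::int. X \<omega> = real_of_int m / real q" by blast
  qed
  show "charfun M (\<lambda>\<omega>. real_of_int \<lfloor>X \<omega>\<rfloor>) t
        = (\<Sum>j<q. h q (t + 2 * pi * real j) * charfun M X (t + 2 * pi * real j))
    \<and> charfun M (\<lambda>\<omega>. real_of_int (round_near (X \<omega>))) t
        = (\<Sum>j<q. h_tilde q (t + 2 * pi * real j) * charfun M X (t + 2 * pi * real j))"
  proof
    show "charfun M (\<lambda>\<omega>. real_of_int \<lfloor>X \<omega>\<rfloor>) t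
        = (\<Sum>j<q. h q (t + 2 * pi * real j) * charfun M X (t + 2 * pi * real j))"
    proof (rule charfun_combo[OF P])
      show "AE \<omega> in M. exp (\<i> * complex_of_real (t * real_of_int \<lfloor>X \<omega>\<rfloor>))
               = (\<Sum>j<q. h q (t + 2 * pi * real j) * exp (\<i> * complex_of_real ((t + 2 * pi * real j) * X \<omega>)))"
        using AEm
      proof (rule AE_mp, intro AE_I2 impI)
        fix \<omega> assume "\<exists>m::int. X \<omega> = real_of_int m / real q"
        then obtain m :: int where m: "X \<omega> = real_of_int m / real q" by blast
        have fl: "\<lfloor>X \<omega>\<rfloor> = (m - 0) div int q"
          unfolding m using floor_divide_of_int_eq[of m "int q", where 'a=real] by simp
        show "exp (\<i> * complex_of_real (t * real_of_int \<lfloor>X \<omega>\<rfloor>))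
               = (\<Sum>j<q. h q (t + 2 * pi * real j) * exp (\<i> * complex_of_real ((t + 2 * pi * real j) * X \<omega>)))"
          unfolding fl unfolding h_alt m by (rule key[OF q, symmetric])
      qed
    qed measurable
    show "charfun M (\<lambda>\<omega>. real_of_int (round_near (X \<omega>))) t
        = (\<Sum>j<q. h_tilde q (t + 2 * pi * real j) * charfun M X (t + 2 * pi * real j))"
    proof (rule charfun_combo[OF P])
      show "AE \<omega> in M. exp (\<i> * complex_of_real (t * real_of_int (round_near (X \<omega>))))
               = (\<Sum>j<q. h_tilde q (t + 2 * pi * real j) * exp (\<i> * complex_of_real ((t + 2 * pi * real j) * X \<omega>)))"
        using AEm
      proof (rule AE_mp, intro AE_I2 impI)
        fix \<omega> assume "\<exists>m::int. X \<omega> = real_of_int m / real q"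
        then obtain m :: int where m: "X \<omega> = real_of_int m / real q" by blast
        have fl: "round_near (X \<omega>) = (m - (- int (q div 2))) div int q"
          unfolding m round_lemma[OF q] by simp
        show "exp (\<i> * complex_of_real (t * real_of_int (round_near (X \<omega>))))
               = (\<Sum>j<q. h_tilde q (t + 2 * pi * real j) * exp (\<i> * complex_of_real ((t + 2 * pi * real j) * X \<omega>)))"
          unfolding fl unfolding ht_alt m by (rule key[OF q, symmetric])
      qed
    qed (unfold round_near_def, measurable)
  qed
qed

end
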